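(* Let $n=1$, so $\mathfrak h_1$ is the upper half-plane with the action of $SL_2(\mathbb R)$ by fractional linear transformations, and let $X=\Gamma(2)\backslash\mathfrak h_1$ with the anti-holomorphic involution induced by $\tau(z)=-\overline z$. Let $S'=\{\pm I,\pm v\}$ with $v=\begin{pmatrix}0&-1\\1&0\end{pmatrix}$. Then the set $X_{\mathbb R}$ of $\tau$-real points of $X$ is the union of three copies of the half-line $C_1\cong\mathbb R_{>0}$: $$X_{\mathbb R}=\bigcup_{\beta\in\Gamma(2)\backslash SL_2(\mathbb Z)/S'}\ \beta\cdot iC_1$$ (images in $X$), where $iC_1=\{iy:y>0\}$.
   Context: $\Gamma(2)=\{\gamma\in SL_2(\mathbb Z):\gamma\equiv I\bmod 2\}$. A point of $X$ is $\tau$-real if it is fixed by the involution induced by $z\mapsto-\overline z$. *)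

theory Defs
  imports Complex_Main
begin

text \<open>2x2 integer matrices (a b; c d) represented as tuples (a, b, c, d).\<close>
type_synonym mat2 = "int \<times> int \<times> int \<times> int"

fun mmult :: "mat2 \<Rightarrow> mat2 \<Rightarrow> mat2" where
  "mmult (a, b, c, d) (a', b', c', d') =
     (a*a' + b*c', a*b' + b*d', c*a' + d*c', c*b' + d*d')"

definition SL2Z :: "mat2 set" where
  "SL2Z = {(a, b, c, d). a*d - b*c = 1}"

definition Gamma2 :: "mat2 set" where
  "Gamma2 = {(a, b, c, d). (a, b, c, d) \<in> SL2Z \<and> odd a \<and> even b \<and> even c \<and> odd d}"

fun mact :: "mat2 \<Rightarrow> complex \<Rightarrow> complex" where
  "mact (a, b, c, d) z = (of_int a * z + of_int b) / (of_int c * z + of_int d)"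

definition upper_half_plane :: "complex set" where
  "upper_half_plane = {z. Im z > 0}"

text \<open>Gamma(2)-orbit of a point: a point of X = Gamma(2)\textbackslash h.\<close>
definition orbit2 :: "complex \<Rightarrow> complex set" where
  "orbit2 z = {mact g z | g. g \<in> Gamma2}"

definition Xquot :: "complex set set" where
  "Xquot = orbit2 ` upper_half_plane"

definition tau :: "complex \<Rightarrow> complex" where
  "tau z = - cnj z"

definition tauX :: "complex set \<Rightarrow> complex set" where
  "tauX p = tau ` p"

definition X_real :: "complex set set" where
  "X_real = {p \<in> Xquot. tauX p = p}"

definition vmat :: mat2 where "vmat = (0, -1, 1, 0)"

definition S' :: "mat2 set" where
  "S' = {(1, 0, 0, 1), (-1, 0, 0, -1), vmat, (0, 1, -1, 0)}"

definition double_coset :: "mat2 \<Rightarrow> mat2 set" where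
  "double_coset \<beta> = {mmult (mmult g \<beta>) s | g s. g \<in> Gamma2 \<and> s \<in> S'}"

definition double_cosets :: "mat2 set set" where
  "double_cosets = double_coset ` SL2Z"

definition iC1 :: "complex set" where
  "iC1 = {\<i> * of_real y | y. y > 0}"

end

theory Submission
  imports Defs
begin

definition inv2 :: "mat2 \<Rightarrow> mat2" where "inv2 = (\<lambda>(a,b,c,d). (d,-b,-c,a))"
definition I2 :: mat2 where "I2 = (1,0,0,1)"

lemma SL2Z_iff: "(a,b,c,d) \<in> SL2Z \<longleftrightarrow> a*d - b*c = 1" by (simp add: SL2Z_def)
lemma Gamma2_iff: "(a,b,c,d) \<in> Gamma2 \<longleftrightarrow> a*d - b*c = 1 \<and> odd a \<and> even b \<and> even c \<and> odd d"
  by (simp add: Gamma2_def SL2Z_def)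

lemma SL2Z_mult: assumes "A \<in> SL2Z" "B \<in> SL2Z" shows "mmult A B \<in> SL2Z"
proof -
  obtain a b c d where A: "A = (a,b,c,d)" by (metis prod_cases4)
  obtain a' b' c' d' where B: "B = (a',b',c',d')" by (metis prod_cases4)
  have "(a*a' + b*c') * (c*b' + d*d') - (a*b' + b*d') * (c*a' + d*c') = (a*d-b*c)*(a'*d'-b'*c')"
    by (simp add: algebra_simps)
  then show ?thesis using assms by (simp add: A B SL2Z_iff)
qed

lemma mmult_assoc: "mmult (mmult A B) C = mmult A (mmult B C)"
  by (cases A; cases B; cases C) (simp add: algebra_simps)

lemma mmult_I [simp]: "mmult I2 A = A" "mmult A I2 = A"
  by (cases A; simp add: I2_def)+

lemma inv2_mult: "A \<in> SL2Z \<Longrightarrow> mmult (inv2 A) A = I2 \<and> mmult A (inv2 A) = I2 \<and> inv2 A \<in> SL2Z"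
  by (cases A) (auto simp: inv2_def I2_def SL2Z_iff algebra_simps)

lemma I2_Gamma2: "I2 \<in> Gamma2" by (simp add: I2_def Gamma2_iff)
lemma Gamma2_SL: "g \<in> Gamma2 \<Longrightarrow> g \<in> SL2Z" by (auto simp: Gamma2_def)

lemma Gamma2_mult: assumes "A \<in> Gamma2" "B \<in> Gamma2" shows "mmult A B \<in> Gamma2"
proof -
  obtain a b c d where A: "A = (a,b,c,d)" by (metis prod_cases4)
  obtain a' b' c' d' where B: "B = (a',b',c',d')" by (metis prod_cases4)
  have "mmult A B \<in> SL2Z" using assms Gamma2_SL SL2Z_mult by blast
  then show ?thesis using assms by (simp add: A B Gamma2_def)
qed

lemma Gamma2_inv: "A \<in> Gamma2 \<Longrightarrow> inv2 A \<in> Gamma2"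
  by (cases A) (auto simp: inv2_def Gamma2_iff algebra_simps)

lemma S'_SL: "s \<in> S' \<Longrightarrow> s \<in> SL2Z" by (auto simp: S'_def SL2Z_iff vmat_def)

lemma denom_nz: assumes "(a,b,c,d) \<in> SL2Z" "Im z > 0" shows "of_int c * z + of_int d \<noteq> 0"
proof
  assume h: "of_int c * z + of_int d = 0"
  have "Im (of_int c * z + of_int d) = 0" using h by simp
  then have "of_int c * Im z = 0" by simp
  then have "c = 0" using assms(2) by simp
  with h have "d = 0" by simp
  with \<open>c = 0\<close> assms(1) show False by (simp add: SL2Z_iff)
qed

lemma Im_mact: assumes "(a,b,c,d) \<in> SL2Z" "Im z > 0" shows "Im (mact (a,b,c,d) z) > 0"
proof -
  have nz: "of_int c * z + of_int d \<noteq> 0" using denom_nz assms by blast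
  have "(Re (of_int c * z + of_int d))\<^sup>2 + (Im (of_int c * z + of_int d))\<^sup>2 > 0"
    using nz by (metis complex_eq_iff zero_complex.simps sum_power2_gt_zero_iff)
  moreover have "Im (of_int a * z + of_int b) * Re (of_int c * z + of_int d) - Re (of_int a * z + of_int b) * Im (of_int c * z + of_int d) = (a*d - b*c) * Im z"
    by (simp add: algebra_simps)
  moreover have "real_of_int (a*d - b*c) = 1" using assms by (simp add: SL2Z_iff)
  ultimately show ?thesis using assms by (simp add: Im_divide)
qed

lemma mact_mult: assumes "B \<in> SL2Z" "Im z > 0" shows "mact (mmult A B) z = mact A (mact B z)"
proof -
  obtain a b c d where A: "A = (a,b,c,d)" by (metis prod_cases4)
  obtain p q r s where B: "B = (p,q,r,s)" by (metis prod_cases4)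
  have nz: "of_int r * z + of_int s \<noteq> 0" using denom_nz assms B by blast
  define w where "w = (of_int p * z + of_int q) / (of_int r * z + of_int s)"
  have 1: "of_int a * w + of_int b = (of_int a * (of_int p * z + of_int q) + of_int b * (of_int r * z + of_int s)) / (of_int r * z + of_int s)"
    using nz unfolding w_def by (simp add: field_simps)
  have 2: "of_int c * w + of_int d = (of_int c * (of_int p * z + of_int q) + of_int d * (of_int r * z + of_int s)) / (of_int r * z + of_int s)"
    using nz unfolding w_def by (simp add: field_simps)
  have "mact A (mact B z) = (of_int a * (of_int p * z + of_int q) + of_int b * (of_int r * z + of_int s)) / (of_int c * (of_int p * z + of_int q) + of_int d * (of_int r * z + of_int s))"
    using nz by (simp add: A B w_def[symmetric] 1 2)
  also have "\<dots> = mact (mmult A B) z" by (simp add: A B algebra_simps)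
  finally show ?thesis by simp
qed

lemma mact_I [simp]: "mact I2 z = z" by (simp add: I2_def)

lemma orbit2_mact: assumes "h \<in> Gamma2" "Im z > 0" shows "orbit2 (mact h z) = orbit2 z"
proof
  show "orbit2 (mact h z) \<subseteq> orbit2 z"
  proof
    fix u assume "u \<in> orbit2 (mact h z)"
    then obtain g where g: "g \<in> Gamma2" "u = mact g (mact h z)" by (auto simp: orbit2_def)
    then have "u = mact (mmult g h) z" using mact_mult[OF Gamma2_SL[OF assms(1)] assms(2)] by simp
    then show "u \<in> orbit2 z" using Gamma2_mult g assms unfolding orbit2_def by blast
  qed
next
  show "orbit2 z \<subseteq> orbit2 (mact h z)"
  proof
    fix u assume "u \<in> orbit2 z"
    then obtain g where g: "g \<in> Gamma2" "u = mact g z" by (auto simp: orbit2_def)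
    have hs: "h \<in> SL2Z" using assms Gamma2_SL by blast
    have "mmult (mmult g (inv2 h)) h = g" using inv2_mult[OF hs] by (simp add: mmult_assoc)
    then have "u = mact (mmult g (inv2 h)) (mact h z)" using mact_mult[OF hs assms(2), of "mmult g (inv2 h)"] g by simp
    then show "u \<in> orbit2 (mact h z)" using Gamma2_mult Gamma2_inv g assms unfolding orbit2_def by blast
  qed
qed

lemma self_orbit2: "z \<in> orbit2 z"
  unfolding orbit2_def using I2_Gamma2 mact_I by (metis (mono_tags, lifting) mem_Collect_eq)

definition flip2 :: "mat2 \<Rightarrow> mat2" where "flip2 = (\<lambda>(a,b,c,d). (a,-b,-c,d))"

lemma tau_mact: "tau (mact g z) = mact (flip2 g) (tau z)"
proof -
  obtain a b c d where A: "g = (a,b,c,d)" by (metis prod_cases4)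
  show ?thesis by (simp add: A flip2_def tau_def minus_divide_left)
qed

lemma flip2_Gamma2: "g \<in> Gamma2 \<Longrightarrow> flip2 g \<in> Gamma2"
proof -
  obtain a b c d where A: "g = (a,b,c,d)" by (metis prod_cases4)
  show "g \<in> Gamma2 \<Longrightarrow> flip2 g \<in> Gamma2" by (simp add: A flip2_def Gamma2_iff)
qed

lemma flip2_flip2 [simp]: "flip2 (flip2 g) = g"
proof -
  obtain a b c d where A: "g = (a,b,c,d)" by (metis prod_cases4)
  show ?thesis by (simp add: A flip2_def)
qed

lemma tauX_orbit2: "tauX (orbit2 z) = orbit2 (tau z)"
proof
  show "tauX (orbit2 z) \<subseteq> orbit2 (tau z)"
  proof
    fix u assume "u \<in> tauX (orbit2 z)"
    then obtain g where g: "g \<in> Gamma2" "u = tau (mact g z)" by (auto simp: orbit2_def tauX_def)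
    then have "u = mact (flip2 g) (tau z)" by (simp add: tau_mact)
    then show "u \<in> orbit2 (tau z)" unfolding orbit2_def using flip2_Gamma2 g by blast
  qed
next
  show "orbit2 (tau z) \<subseteq> tauX (orbit2 z)"
  proof
    fix u assume "u \<in> orbit2 (tau z)"
    then obtain g where g: "g \<in> Gamma2" "u = mact g (tau z)" by (auto simp: orbit2_def)
    then have "u = tau (mact (flip2 g) z)" by (simp add: tau_mact)
    then show "u \<in> tauX (orbit2 z)" unfolding tauX_def orbit2_def using flip2_Gamma2 g by blast
  qed
qed


lemma geo:
  "nat \<bar>c\<bar> = n \<Longrightarrow> a^2 - b*c = 1 \<Longrightarrow> even b \<Longrightarrow> even c \<Longrightarrow> Im z > 0 \<Longrightarrow>
   of_int c * ((Re z)^2 + (Im z)^2) + 2 * of_int a * Re z + of_int b = (0::real) \<Longrightarrow>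
   \<exists>\<gamma>\<in>SL2Z. \<exists>t>0. z = mact \<gamma> (\<i> * complex_of_real t)"
proof (induction n arbitrary: a b c z rule: less_induct)
  case (less n)
  have main: "\<exists>\<gamma>\<in>SL2Z. \<exists>t>0. z = mact \<gamma> (\<i> * complex_of_real t)"
    if h: "nat \<bar>c\<bar> = n" "c > 0" "a^2 - b*c = 1" "even b" "even c" "Im z > 0"
      "of_int c * ((Re z)^2 + (Im z)^2) + 2 * of_int a * Re z + of_int b = (0::real)" for a b c z
  proof -
    obtain k where k: "\<bar>2*(a + k*c)\<bar> \<le> c"
    proof (cases "2*(a mod c) \<le> c")
      case True
      have "a + (-(a div c))*c = a mod c" by (simp add: minus_div_mult_eq_mod[symmetric])
      moreover have "a mod c \<ge> 0" using h(2) by simp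
      ultimately show thesis using True by (intro that[of "-(a div c)"]) simp
    next
      case False
      have "a + (-(a div c) - 1)*c = a mod c - c" by (simp add: minus_div_mult_eq_mod[symmetric] algebra_simps)
      moreover have "a mod c < c" using h(2) by simp
      ultimately show thesis using False by (intro that[of "-(a div c) - 1"]) simp
    qed
    define a' where "a' = a + k*c"
    define b' where "b' = b + 2*a*k + c*k^2"
    have "a'^2 - b'*c = a^2 - b*c" unfolding a'_def b'_def by (simp add: algebra_simps power2_eq_square)
    then have det': "a'^2 - b'*c = 1" using h(3) by simp
    have "odd a"
    proof
      assume "even a"
      then have "even (a^2 - b*c)" using h(5) by simp
      with h(3) show False by simp
    qed
    then have "odd a'" unfolding a'_def using h(5) by simp
    then have "a' \<noteq> 0" by auto
    then have "0 < a'^2" by simp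
    then have a2: "1 \<le> a'^2" by arith
    have bc: "b'*c = a'^2 - 1" using det' by simp
    then have "0 \<le> b'*c" using a2 by linarith
    then have b'0: "0 \<le> b'" using h(2) by (simp add: zero_le_mult_iff)
    have "\<bar>2*a'\<bar>^2 \<le> c^2" using k unfolding a'_def by (intro power_mono) auto
    then have "4*a'^2 \<le> c^2" by (simp add: power_mult_distrib)
    then have "(4*b')*c < c*c" using bc by (simp add: power2_eq_square algebra_simps)
    then have "4*b' < c" using h(2) by (simp add: mult_less_cancel_right)
    then have lt: "nat \<bar>b'\<bar> < n" using h(1,2) b'0 by simp
    define w where "w = z - of_int k"
    have Imw: "Im w = Im z" "Re w = Re z - of_int k" unfolding w_def by simp_all
    have "of_int c * ((Re w)^2 + (Im w)^2) + 2 * of_int a' * Re w + of_int b'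
        = of_int c * ((Re z)^2 + (Im z)^2) + 2 * of_int a * Re z + (of_int b :: real)"
      unfolding Imw a'_def b'_def by (simp add: algebra_simps power2_eq_square)
    then have eqw: "of_int c * ((Re w)^2 + (Im w)^2) + 2 * of_int a' * Re w + of_int b' = (0::real)"
      using h(7) by simp
    define N where "N = (Re w)^2 + (Im w)^2"
    have N0: "N > 0" unfolding N_def using Imw h(6) by (simp add: sum_power2_gt_zero_iff)
    have wnz: "w \<noteq> 0" using Imw h(6) by auto
    define v where "v = -1/w"
    have Rev: "Re v = - Re w / N" and Imv: "Im v = Im w / N" unfolding v_def N_def
      by (simp_all add: Re_divide Im_divide)
    have Imv0: "Im v > 0" using Imv N0 Imw h(6) by simp
    have "of_int b' * ((Re v)^2 + (Im v)^2) + 2 * of_int (-a') * Re v + of_int c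
        = (of_int c * N + 2 * of_int a' * Re w + of_int b') / N"
    proof -
      have "(Re v)^2 + (Im v)^2 = ((Re w)^2 + (Im w)^2) / N^2" unfolding Rev Imv by (simp add: power_divide add_divide_distrib)
      also have "\<dots> = 1 / N" using N0 unfolding N_def[symmetric] by (simp add: power2_eq_square)
      finally have nv: "(Re v)^2 + (Im v)^2 = 1 / N" .
      have "of_int b' * (1/N) + 2 * of_int (-a') * (- Re w / N) + of_int c
        = (of_int c * N + 2 * of_int a' * Re w + of_int b') / N" using N0 by (simp add: field_simps)
      then show ?thesis by (simp only: nv) (simp only: Rev)
    qed
    also have "\<dots> = 0" using eqw unfolding N_def by simp
    finally have eqv: "of_int b' * ((Re v)^2 + (Im v)^2) + 2 * of_int (-a') * Re v + of_int c = (0::real)" .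
    have det'': "(-a')^2 - c*b' = 1" using det' by (simp add: algebra_simps)
    have "even b'" unfolding b'_def using h(4,5) by simp
    obtain \<gamma> t where g: "\<gamma> \<in> SL2Z" "t > 0" "v = mact \<gamma> (\<i> * complex_of_real t)"
      using less.IH[OF lt refl det'' h(5) \<open>even b'\<close> Imv0 eqv] by blast
    have S: "(0,-1,1,0) \<in> SL2Z" and T: "(1,k,0,1) \<in> SL2Z" by (simp_all add: SL2Z_iff)
    have tH: "Im (\<i> * complex_of_real t) > 0" using g(2) by simp
    have "mact (0,-1,1,0) v = w" using wnz unfolding v_def by simp
    moreover have "mact (1,k,0,1) w = z" unfolding w_def by simp
    ultimately have "z = mact (1,k,0,1) (mact (0,-1,1,0) (mact \<gamma> (\<i> * complex_of_real t)))"
      using g(3) by simp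
    also have "\<dots> = mact (mmult (1,k,0,1) (mmult (0,-1,1,0) \<gamma>)) (\<i> * complex_of_real t)"
      using mact_mult[OF SL2Z_mult[OF S g(1)] tH] mact_mult[OF g(1) tH] by simp
    finally show ?thesis using SL2Z_mult[OF T SL2Z_mult[OF S g(1)]] g(2) by blast
  qed
  consider "c = 0" | "c > 0" | "c < 0" by linarith
  then show ?case
  proof cases
    case 1
    then have "a^2 = 1" using less.prems(2) by simp
    then have a1: "a = 1 \<or> a = -1" by (simp add: power2_eq_1_iff)
    obtain b2 where b2: "b = 2*b2" using less.prems(3) by blast
    have e: "2 * of_int a * Re z + 2 * of_int b2 = (0::real)" using less.prems(6) 1 b2 by simp
    have x: "Re z = of_int (-a*b2)" using a1 e by auto
    have "z = mact (1, -a*b2, 0, 1) (\<i> * complex_of_real (Im z))"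
      using x by (simp add: complex_eq_iff)
    moreover have "(1, -a*b2, 0, 1) \<in> SL2Z" by (simp add: SL2Z_iff)
    ultimately show ?thesis using less.prems(5) by blast
  next
    case 2
    then show ?thesis using main less.prems by blast
  next
    case 3
    have "of_int (-c) * ((Re z)^2 + (Im z)^2) + 2 * of_int (-a) * Re z + of_int (-b) = (0::real)"
      using less.prems(6) by simp
    moreover have "(-a)^2 - (-b)*(-c) = 1" using less.prems(2) by simp
    ultimately show ?thesis using main[of "-c" "-a" "-b" z] less.prems 3 by simp
  qed
qed


definition par :: "mat2 \<Rightarrow> bool \<times> bool \<times> bool \<times> bool" where
  "par = (\<lambda>(a,b,c,d). (even a, even b, even c, even d))"

lemma par_key: assumes "g \<in> SL2Z" "m \<in> SL2Z" "par g = par m"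
  shows "mmult g (inv2 m) \<in> Gamma2"
proof -
  obtain a b c d where A: "g = (a,b,c,d)" by (metis prod_cases4)
  obtain a' b' c' d' where B: "m = (a',b',c',d')" by (metis prod_cases4)
  have "mmult g (inv2 m) \<in> SL2Z" using assms SL2Z_mult inv2_mult by blast
  moreover have "odd (a'*d' - b'*c')" "odd (a*d - b*c)" using assms(1,2) by (simp_all add: A B SL2Z_iff)
  ultimately show ?thesis using assms(3) by (simp add: A B inv2_def par_def Gamma2_def) blast
qed

lemma par_Gamma: assumes "h \<in> Gamma2" shows "par (mmult h m) = par m"
proof -
  obtain a b c d where A: "h = (a,b,c,d)" by (metis prod_cases4)
  obtain a' b' c' d' where B: "m = (a',b',c',d')" by (metis prod_cases4)
  show ?thesis using assms by (simp add: A B par_def Gamma2_iff)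
qed

definition swp :: "bool \<times> bool \<times> bool \<times> bool \<Rightarrow> bool \<times> bool \<times> bool \<times> bool" where
  "swp = (\<lambda>(x,y,z,w). (y,x,w,z))"

lemma par_v: "par (mmult m vmat) = swp (par m)"
proof -
  obtain a b c d where A: "m = (a,b,c,d)" by (metis prod_cases4)
  show ?thesis by (simp add: A par_def swp_def vmat_def)
qed

lemma par_S': assumes "s \<in> S'" shows "par (mmult m s) = par m \<or> par (mmult m s) = swp (par m)"
proof -
  obtain a b c d where A: "m = (a,b,c,d)" by (metis prod_cases4)
  show ?thesis using assms by (auto simp: A S'_def par_def swp_def vmat_def)
qed

definition cls :: "bool \<times> bool \<times> bool \<times> bool \<Rightarrow> mat2 set" where
  "cls P = {g \<in> SL2Z. par g = P \<or> par g = swp P}"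

lemma I2_S': "I2 \<in> S'" by (simp add: I2_def S'_def)
lemma v_S': "vmat \<in> S'" by (simp add: S'_def)
lemma v_SL: "vmat \<in> SL2Z" by (simp add: vmat_def SL2Z_iff)

lemma DC: assumes "\<beta> \<in> SL2Z" shows "double_coset \<beta> = cls (par \<beta>)"
proof
  show "double_coset \<beta> \<subseteq> cls (par \<beta>)"
  proof
    fix x assume "x \<in> double_coset \<beta>"
    then obtain h s where hs: "h \<in> Gamma2" "s \<in> S'" "x = mmult (mmult h \<beta>) s"
      by (auto simp: double_coset_def)
    have "x \<in> SL2Z" using hs assms SL2Z_mult Gamma2_SL S'_SL by metis
    moreover have "par x = par \<beta> \<or> par x = swp (par \<beta>)"
      using par_S'[OF hs(2), of "mmult h \<beta>"] par_Gamma[OF hs(1)] hs(3) by simp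
    ultimately show "x \<in> cls (par \<beta>)" by (simp add: cls_def)
  qed
next
  show "cls (par \<beta>) \<subseteq> double_coset \<beta>"
  proof
    fix g assume "g \<in> cls (par \<beta>)"
    then have g: "g \<in> SL2Z" "par g = par \<beta> \<or> par g = swp (par \<beta>)" by (auto simp: cls_def)
    from g(2) show "g \<in> double_coset \<beta>"
    proof
      assume p: "par g = par \<beta>"
      define h where "h = mmult g (inv2 \<beta>)"
      have "h \<in> Gamma2" using par_key[OF g(1) assms p] h_def by simp
      moreover have "g = mmult (mmult h \<beta>) I2"
        using inv2_mult[OF assms] by (simp add: h_def mmult_assoc)
      ultimately show ?thesis using I2_S' unfolding double_coset_def by blast
    next
      assume p: "par g = swp (par \<beta>)"
      define m where "m = mmult \<beta> vmat"
      have m: "m \<in> SL2Z" using SL2Z_mult[OF assms v_SL] m_def by simp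
      define h where "h = mmult g (inv2 m)"
      have "h \<in> Gamma2" using par_key[OF g(1) m] p par_v h_def m_def by simp
      moreover have "g = mmult (mmult h \<beta>) vmat"
        using inv2_mult[OF m] by (simp add: h_def m_def mmult_assoc)
      ultimately show ?thesis using v_S' unfolding double_coset_def by blast
    qed
  qed
qed

lemma cls_swp: "cls (swp P) = cls P"
  unfolding cls_def swp_def by (cases P) auto

lemma par_SL: assumes "\<beta> \<in> SL2Z"
  shows "par \<beta> \<in> {(False,True,True,False), (True,False,False,True), (False,True,False,False),
     (True,False,False,False), (False,False,True,False), (False,False,False,True)}"
proof -
  obtain a b c d where A: "\<beta> = (a,b,c,d)" by (metis prod_cases4)
  have "odd (a*d - b*c)" using assms by (simp add: A SL2Z_iff)
  then show ?thesis by (simp add: A par_def) (cases "even a"; cases "even b"; cases "even c"; cases "even d"; simp)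
qed

definition "\<beta>2 = ((1,0,1,1) :: mat2)"
definition "\<beta>3 = ((1,1,0,1) :: mat2)"

lemma dcs: "double_cosets = {double_coset I2, double_coset \<beta>2, double_coset \<beta>3}"
proof -
  have I: "I2 \<in> SL2Z" "\<beta>2 \<in> SL2Z" "\<beta>3 \<in> SL2Z" by (simp_all add: I2_def \<beta>2_def \<beta>3_def SL2Z_iff)
  have c1: "double_coset I2 = cls (False,True,True,False)" unfolding DC[OF I(1)] by (simp add: I2_def par_def)
  have c2: "double_coset \<beta>2 = cls (False,True,False,False)" unfolding DC[OF I(2)] by (simp add: \<beta>2_def par_def)
  have c3: "double_coset \<beta>3 = cls (False,False,True,False)" unfolding DC[OF I(3)] by (simp add: \<beta>3_def par_def)
  have s1: "cls (True,False,False,True) = cls (False,True,True,False)"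
    using cls_swp[of "(False,True,True,False)"] by (simp add: swp_def)
  have s2: "cls (True,False,False,False) = cls (False,True,False,False)"
    using cls_swp[of "(False,True,False,False)"] by (simp add: swp_def)
  have s3: "cls (False,False,False,True) = cls (False,False,True,False)"
    using cls_swp[of "(False,False,True,False)"] by (simp add: swp_def)
  show ?thesis
  proof
    show "double_cosets \<subseteq> {double_coset I2, double_coset \<beta>2, double_coset \<beta>3}"
    proof
      fix D assume "D \<in> double_cosets"
      then obtain \<beta> where b: "\<beta> \<in> SL2Z" "D = double_coset \<beta>" by (auto simp: double_cosets_def)
      show "D \<in> {double_coset I2, double_coset \<beta>2, double_coset \<beta>3}"
        using par_SL[OF b(1)] unfolding b(2) DC[OF b(1)] c1 c2 c3 by (auto simp: s1 s2 s3)
    qed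
    show "{double_coset I2, double_coset \<beta>2, double_coset \<beta>3} \<subseteq> double_cosets"
      using I by (auto simp: double_cosets_def)
  qed
qed

lemma card3: "card double_cosets = 3"
proof -
  have I: "I2 \<in> SL2Z" "\<beta>2 \<in> SL2Z" "\<beta>3 \<in> SL2Z" by (simp_all add: I2_def \<beta>2_def \<beta>3_def SL2Z_iff)
  have a: "I2 \<in> double_coset I2" "I2 \<notin> double_coset \<beta>2" "I2 \<notin> double_coset \<beta>3"
    "\<beta>2 \<in> double_coset \<beta>2" "\<beta>2 \<notin> double_coset \<beta>3"
    by (simp_all add: DC I cls_def I2_def \<beta>2_def \<beta>3_def par_def swp_def SL2Z_iff)
  then have "double_coset I2 \<noteq> double_coset \<beta>2" "double_coset I2 \<noteq> double_coset \<beta>3"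
    "double_coset \<beta>2 \<noteq> double_coset \<beta>3" by metis+
  then show ?thesis unfolding dcs by simp
qed


definition Rset :: "complex set set" where
  "Rset = {orbit2 (mact \<beta> (\<i> * complex_of_real t)) | \<beta> t. \<beta> \<in> SL2Z \<and> t > 0}"

lemma fixed_eq:
  assumes g: "(a,b,c,d) \<in> Gamma2" and z: "Im z > 0" and e: "tau z = mact (a,b,c,d) z"
  shows "a^2 - b*c = 1 \<and> even b \<and> even c \<and>
    of_int c * ((Re z)^2 + (Im z)^2) + 2 * of_int a * Re z + of_int b = (0::real)"
proof -
  have gs: "(a,b,c,d) \<in> SL2Z" using g Gamma2_SL by blast
  have nz: "of_int c * z + of_int d \<noteq> 0" using denom_nz[OF gs z] .
  have "- cnj z * (of_int c * z + of_int d) = of_int a * z + of_int b"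
    using e nz by (simp add: tau_def field_simps)
  then have re: "Re (- cnj z * (of_int c * z + of_int d)) = Re (of_int a * z + of_int b)"
    and im: "Im (- cnj z * (of_int c * z + of_int d)) = Im (of_int a * z + of_int b)" by simp_all
  from im have "of_int d * Im z = of_int a * Im z" by (simp add: algebra_simps)
  then have "d = a" using z by simp
  from re have "- (of_int c * ((Re z)^2 + (Im z)^2) + of_int d * Re z) = of_int a * Re z + of_int b"
    by (simp add: algebra_simps power2_eq_square)
  then have "of_int c * ((Re z)^2 + (Im z)^2) + 2 * of_int a * Re z + of_int b = (0::real)"
    using \<open>d = a\<close> by (simp add: algebra_simps)
  moreover have "a^2 - b*c = 1" using g \<open>d = a\<close> by (simp add: Gamma2_iff power2_eq_square)
  ultimately show ?thesis using g by (simp add: Gamma2_iff)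
qed

lemma Xreal_R: "X_real = Rset"
proof
  show "X_real \<subseteq> Rset"
  proof
    fix p assume "p \<in> X_real"
    then obtain z where z: "Im z > 0" "p = orbit2 z" "tauX p = p"
      by (auto simp: X_real_def Xquot_def upper_half_plane_def)
    then have "orbit2 (tau z) = orbit2 z" using tauX_orbit2 by simp
    then have "tau z \<in> orbit2 z" using self_orbit2 by metis
    then obtain g where g: "g \<in> Gamma2" "tau z = mact g z" by (auto simp: orbit2_def)
    obtain a b c d where A: "g = (a,b,c,d)" by (metis prod_cases4)
    have "a^2 - b*c = 1 \<and> even b \<and> even c \<and>
      of_int c * ((Re z)^2 + (Im z)^2) + 2 * of_int a * Re z + of_int b = (0::real)"
      using fixed_eq g z(1) A by blast
    then obtain \<gamma> t where "\<gamma> \<in> SL2Z" "t > 0" "z = mact \<gamma> (\<i> * complex_of_real t)"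
      using geo[OF refl, of a b c z] z(1) by blast
    then show "p \<in> Rset" unfolding Rset_def z(2) by blast
  qed
next
  show "Rset \<subseteq> X_real"
  proof
    fix p assume "p \<in> Rset"
    then obtain \<beta> t where b: "\<beta> \<in> SL2Z" "t > 0" "p = orbit2 (mact \<beta> (\<i> * complex_of_real t))"
      by (auto simp: Rset_def)
    obtain a b c d where A: "\<beta> = (a,b,c,d)" by (metis prod_cases4)
    define \<tau>0 where "\<tau>0 = \<i> * complex_of_real t"
    define z where "z = mact \<beta> \<tau>0"
    have tH: "Im \<tau>0 > 0" using b(2) by (simp add: \<tau>0_def)
    have zH: "Im z > 0" using Im_mact b(1) tH A z_def by simp
    have det: "a*d - b*c = 1" using b(1) A by (simp add: SL2Z_iff)
    define g where "g = (a*d + b*c, -2*a*b, -2*c*d, a*d + b*c)"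
    have e1: "(a*d+b*c)*(a*d+b*c) - (-2*a*b)*(-2*c*d) = (a*d-b*c)*(a*d-b*c)" by (simp add: algebra_simps)
    have e2: "a*d+b*c = 1 + 2*(b*c)" using det by simp
    have e3: "(a*d+b*c)*(a*d+b*c) - (-2*a*b)*(-2*c*d) = 1" using e1[unfolded det] by simp
    have gG: "g \<in> Gamma2" unfolding g_def Gamma2_iff by (intro conjI e3) (simp_all add: e2)
    have "mmult g \<beta> = flip2 \<beta>"
    proof -
      have "(a*d + b*c)*a + (-2*a*b)*c = a*(a*d - b*c)" "(a*d + b*c)*b + (-2*a*b)*d = -b*(a*d-b*c)"
           "(-2*c*d)*a + (a*d+b*c)*c = -c*(a*d-b*c)" "(-2*c*d)*b + (a*d+b*c)*d = d*(a*d-b*c)"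
        by (simp_all add: algebra_simps)
      then show ?thesis using det by (simp add: A g_def flip2_def)
    qed
    have "tau \<tau>0 = \<tau>0" by (simp add: \<tau>0_def tau_def)
    then have "tau z = mact (flip2 \<beta>) \<tau>0" by (simp add: z_def tau_mact)
    also have "\<dots> = mact g z" using mact_mult[OF b(1) tH, of g] \<open>mmult g \<beta> = flip2 \<beta>\<close> z_def by simp
    finally have "tauX p = orbit2 z" using orbit2_mact[OF gG zH] tauX_orbit2 b(3) z_def \<tau>0_def by simp
    moreover have "p = orbit2 z" using b(3) z_def \<tau>0_def by simp
    moreover have "p \<in> Xquot" using zH \<open>p = orbit2 z\<close> by (simp add: Xquot_def upper_half_plane_def)
    ultimately show "p \<in> X_real" by (simp add: X_real_def)
  qed
qed

lemma S'_it: assumes "s \<in> S'" "t > 0" shows "\<exists>y>0. mact s (\<i> * complex_of_real y) = \<i> * complex_of_real t"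
proof -
  have "s = (1,0,0,1) \<or> s = (-1,0,0,-1) \<or> s = (0,-1,1,0) \<or> s = (0,1,-1,0)"
    using assms(1) by (auto simp: S'_def vmat_def)
  then show ?thesis
  proof (elim disjE)
    assume "s = (1,0,0,1)" then show ?thesis using assms(2) by auto
  next
    assume "s = (-1,0,0,-1)" then show ?thesis using assms(2) by auto
  next
    assume "s = (0,-1,1,0)"
    then have "mact s (\<i> * complex_of_real (1/t)) = \<i> * complex_of_real t"
      using assms(2) by (simp add: field_simps complex_eq_iff)
    then show ?thesis using assms(2) by (intro exI[of _ "1/t"]) simp
  next
    assume "s = (0,1,-1,0)"
    then have "mact s (\<i> * complex_of_real (1/t)) = \<i> * complex_of_real t"
      using assms(2) by (simp add: field_simps complex_eq_iff)
    then show ?thesis using assms(2) by (intro exI[of _ "1/t"]) simp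
  qed
qed

lemma Union_R: "(\<Union>D\<in>double_cosets. orbit2 ` (mact (SOME \<beta>. \<beta> \<in> D) ` iC1)) = Rset"
proof
  show "(\<Union>D\<in>double_cosets. orbit2 ` (mact (SOME \<beta>. \<beta> \<in> D) ` iC1)) \<subseteq> Rset"
  proof
    fix x assume "x \<in> (\<Union>D\<in>double_cosets. orbit2 ` (mact (SOME \<beta>. \<beta> \<in> D) ` iC1))"
    then obtain D y where D: "D \<in> double_cosets" "y > 0" "x = orbit2 (mact (SOME \<beta>. \<beta> \<in> D) (\<i> * complex_of_real y))"
      by (auto simp: iC1_def)
    then obtain \<beta>0 where b0: "\<beta>0 \<in> SL2Z" "D = double_coset \<beta>0" by (auto simp: double_cosets_def)
    have "\<beta>0 = mmult (mmult I2 \<beta>0) I2" by simp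
    then have "\<beta>0 \<in> D" unfolding b0(2) double_coset_def using I2_Gamma2 I2_S' by blast
    then have "(SOME \<beta>. \<beta> \<in> D) \<in> D" by (rule someI)
    then obtain h s where hs: "h \<in> Gamma2" "s \<in> S'" "(SOME \<beta>. \<beta> \<in> D) = mmult (mmult h \<beta>0) s"
      unfolding b0(2) double_coset_def by blast
    have "(SOME \<beta>. \<beta> \<in> D) \<in> SL2Z" unfolding hs(3)
      using SL2Z_mult[OF SL2Z_mult[OF Gamma2_SL[OF hs(1)] b0(1)] S'_SL[OF hs(2)]] .
    then show "x \<in> Rset" unfolding Rset_def using D by blast
  qed
next
  show "Rset \<subseteq> (\<Union>D\<in>double_cosets. orbit2 ` (mact (SOME \<beta>. \<beta> \<in> D) ` iC1))"
  proof
    fix x assume "x \<in> Rset"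
    then obtain \<beta> t where b: "\<beta> \<in> SL2Z" "t > 0" "x = orbit2 (mact \<beta> (\<i> * complex_of_real t))"
      by (auto simp: Rset_def)
    define D where "D = double_coset \<beta>"
    have DD: "D \<in> double_cosets" using b(1) by (simp add: D_def double_cosets_def)
    have "\<beta> = mmult (mmult I2 \<beta>) I2" by simp
    then have "\<beta> \<in> D" unfolding D_def double_coset_def using I2_Gamma2 I2_S' by blast
    then have "(SOME \<beta>. \<beta> \<in> D) \<in> D" by (rule someI)
    then obtain h s where hs: "h \<in> Gamma2" "s \<in> S'" "(SOME \<beta>. \<beta> \<in> D) = mmult (mmult h \<beta>) s"
      unfolding D_def double_coset_def by blast
    obtain y where y: "y > 0" "mact s (\<i> * complex_of_real y) = \<i> * complex_of_real t"
      using S'_it[OF hs(2) b(2)] by blast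
    have yH: "Im (\<i> * complex_of_real y) > 0" "Im (\<i> * complex_of_real t) > 0" using y(1) b(2) by simp_all
    have hS: "h \<in> SL2Z" using hs(1) Gamma2_SL by blast
    obtain a0 b0 c0 d0 where A: "\<beta> = (a0,b0,c0,d0)" by (metis prod_cases4)
    have wH: "Im (mact \<beta> (\<i> * complex_of_real t)) > 0" using Im_mact b(1) yH(2) A by simp
    have "mact (SOME \<beta>. \<beta> \<in> D) (\<i> * complex_of_real y) = mact (mmult h \<beta>) (\<i> * complex_of_real t)"
      using mact_mult[OF S'_SL[OF hs(2)] yH(1), of "mmult h \<beta>"] hs(3) y(2) by simp
    also have "\<dots> = mact h (mact \<beta> (\<i> * complex_of_real t))" using mact_mult[OF b(1) yH(2)] by simp
    finally have "orbit2 (mact (SOME \<beta>. \<beta> \<in> D) (\<i> * complex_of_real y)) = x"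
      using orbit2_mact[OF hs(1) wH] b(3) by simp
    moreover have "\<i> * complex_of_real y \<in> iC1" using y(1) by (auto simp: iC1_def)
    ultimately show "x \<in> (\<Union>D\<in>double_cosets. orbit2 ` (mact (SOME \<beta>. \<beta> \<in> D) ` iC1))"
      using DD by blast
  qed
qed

theorem theorem5p5:
  shows "card double_cosets = 3 \<and>
    X_real = (\<Union>D\<in>double_cosets. orbit2 ` (mact (SOME \<beta>. \<beta> \<in> D) ` iC1))"
  using card3 Xreal_R Union_R by simp

end
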